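(* For any semistandard cylindric tableau $R$ with outer shape $\lambda$ and any set $S$ of boxes satisfying the input conditions of full multi-insertion, the new set $N(R,S)$ forms a horizontal strip.
   Context: Fix integers $n>k\ge1$. A cylindric partition is a weakly decreasing integer sequence $(\lambda_m)_{m\in\mathbb Z}$ with $\lambda_m=\lambda_{m+k}+n-k$. A point $(x,y)\in\mathbb Z^2$ lies in $\lambda$ if $y\le\lambda_x$. Boxes are classes of points modulo translation by multiples of $(-k,n-k)$; row $x$ is the image of plane row $x$ (indexed mod $k$), column $y$ the image of plane column $y$ (indexed mod $n-k$); within a row boxes are ordered left to right by $y$-coordinates of representatives in a fixed plane row. $\mu\subseteq\lambda$ means $\mu_m\le\lambda_m$ for all $m$; boxes of $\lambda/\mu$ are those in $\lambda$ not in $\mu$. A set of boxes forms a horizontal strip if it is the set of boxes of $\lambda'/\mu'$ for some cylindric partitions $\mu'\subseteq\lambda'$ such that no two of these boxes lie in the same column. A (semistandard cylindric) tableau of shape $\lambda/\mu$ is a map from the boxes of $\lambda/\mu$ to a totally ordered alphabet, weakly increasing along plane rows and strictly increasing down plane columns; its shapes are part of its data. Full multi-insertion $\operatorname{FullMulti}(R,S)$: input a tableau $R$ with outer shape $\lambda$, inner shape $\mu$, and a set $S$ of boxes not in $\mu$ forming a horizontal strip such that $\mu$ plus $S$ is a cylindric partition. Choose an integer $r_0$. For $h=r_0,\dots,r_0+k-1$, go through the boxes of $S$ in row $h$ from left to right: if the box is in $\lambda$, remove its entry $x$ and append $(x,h+1)$ to a queue; otherwise add the box to $\lambda$. All boxes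 of $S$ are added to the inner shape. Then, while the current queue $q$ is nonempty: start an empty queue $q'$; remove pairs $(x,s)$ from the front of $q$ one at a time; if $x$ is $\ge$ every entry in row $s$, put $x$ into the leftmost box of row $s$ not in the current outer shape and add it to the outer shape; otherwise replace the leftmost entry $x'$ of row $s$ greater than $x$ by $x$ and append $(x',s+1)$ to $q'$; when $q$ is exhausted set $q:=q'$. The output $\operatorname{FullMulti}(R,S)$ is the resulting tableau, with outer shape $\lambda'$; the new set $N(R,S)$ is the set of boxes of $\lambda'/\lambda$. *)

theory Defs
  imports Main
begin

text \<open>A box is the class of a point modulo
  translation by multiples of (-k, n-k); we represent each box by its canonical
  representative, the unique point of the class lying in plane rows 0..k-1.\<close>

definition cyl_partition :: "int \<Rightarrow> int \<Rightarrow> (int \<Rightarrow> int) \<Rightarrow> bool" where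
  "cyl_partition n k lam \<longleftrightarrow>
     (\<forall>m. lam (m + 1) \<le> lam m) \<and> (\<forall>m. lam m = lam (m + k) + (n - k))"

definition in_shape :: "(int \<Rightarrow> int) \<Rightarrow> int \<times> int \<Rightarrow> bool" where
  "in_shape lam p \<longleftrightarrow> snd p \<le> lam (fst p)"

definition canon :: "int \<Rightarrow> int \<Rightarrow> int \<times> int \<Rightarrow> int \<times> int" where
  "canon n k p = (fst p mod k, snd p + (fst p div k) * (n - k))"

definition skew_boxes :: "int \<Rightarrow> (int \<Rightarrow> int) \<Rightarrow> (int \<Rightarrow> int) \<Rightarrow> (int \<times> int) set" where
  "skew_boxes k mu lam = {(x, y). 0 \<le> x \<and> x < k \<and> mu x < y \<and> y \<le> lam x}"

definition box_column :: "int \<Rightarrow> int \<Rightarrow> int \<times> int \<Rightarrow> int" where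
  "box_column n k b = snd b mod (n - k)"

definition horizontal_strip :: "int \<Rightarrow> int \<Rightarrow> (int \<times> int) set \<Rightarrow> bool" where
  "horizontal_strip n k B \<longleftrightarrow>
     (\<exists>mu' lam'. cyl_partition n k mu' \<and> cyl_partition n k lam' \<and> (\<forall>m. mu' m \<le> lam' m)
                 \<and> B = skew_boxes k mu' lam') \<and>
     (\<forall>b1\<in>B. \<forall>b2\<in>B. b1 \<noteq> b2 \<longrightarrow> box_column n k b1 \<noteq> box_column n k b2)"

text \<open>A tableau is a triple (mu, lam, E): inner shape, outer shape, and entries
  E assigned to boxes (canonical representatives); the entry of a plane point p
  is E (canon n k p).  Only the values on boxes of lam/mu are meaningful.\<close>

type_synonym 'a tableau = "(int \<Rightarrow> int) \<times> (int \<Rightarrow> int) \<times> (int \<times> int \<Rightarrow> 'a)"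

definition in_skew :: "(int \<Rightarrow> int) \<Rightarrow> (int \<Rightarrow> int) \<Rightarrow> int \<times> int \<Rightarrow> bool" where
  "in_skew mu lam p \<longleftrightarrow> in_shape lam p \<and> \<not> in_shape mu p"

definition is_tableau :: "int \<Rightarrow> int \<Rightarrow> ('a::linorder) tableau \<Rightarrow> bool" where
  "is_tableau n k R \<longleftrightarrow> (case R of (mu, lam, E) \<Rightarrow>
     cyl_partition n k mu \<and> cyl_partition n k lam \<and> (\<forall>m. mu m \<le> lam m) \<and>
     (\<forall>x y. in_skew mu lam (x, y) \<and> in_skew mu lam (x, y + 1) \<longrightarrow>
            E (canon n k (x, y)) \<le> E (canon n k (x, y + 1))) \<and>
     (\<forall>x y. in_skew mu lam (x, y) \<and> in_skew mu lam (x + 1, y) \<longrightarrow>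
            E (canon n k (x, y)) < E (canon n k (x + 1, y))))"

definition adds_to :: "int \<Rightarrow> int \<Rightarrow> (int \<Rightarrow> int) \<Rightarrow> (int \<times> int) set \<Rightarrow> (int \<Rightarrow> int) \<Rightarrow> bool" where
  "adds_to n k mu S nu \<longleftrightarrow> cyl_partition n k nu \<and>
     (\<forall>p. in_shape nu p \<longleftrightarrow> in_shape mu p \<or> canon n k p \<in> S)"

definition fm_input :: "int \<Rightarrow> int \<Rightarrow> ('a::linorder) tableau \<Rightarrow> (int \<times> int) set \<Rightarrow> bool" where
  "fm_input n k R S \<longleftrightarrow> (case R of (mu, lam, E) \<Rightarrow>
     (\<forall>p. canon n k p \<in> S \<longrightarrow> \<not> in_shape mu p) \<and>
     horizontal_strip n k S \<and> (\<exists>nu. adds_to n k mu S nu))"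

text \<open>State of the algorithm: (inner shape, outer shape, entries, current queue q, next queue q').\<close>
type_synonym 'a fm_state =
  "(int \<Rightarrow> int) \<times> (int \<Rightarrow> int) \<times> (int \<times> int \<Rightarrow> 'a) \<times> ('a \<times> int) list \<times> ('a \<times> int) list"

definition fm_process ::
  "int \<Rightarrow> int \<Rightarrow> (int \<Rightarrow> int) \<Rightarrow> (int \<Rightarrow> int) \<Rightarrow> (int \<times> int \<Rightarrow> 'a::linorder) \<Rightarrow> 'a \<Rightarrow> int
   \<Rightarrow> (int \<Rightarrow> int) \<times> (int \<times> int \<Rightarrow> 'a) \<times> ('a \<times> int) list" where
  "fm_process n k mu lam E x s =
     (if (\<forall>y. mu s < y \<and> y \<le> lam s \<longrightarrow> E (canon n k (s, y)) \<le> x)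
      then ((\<lambda>m. if m mod k = s mod k then lam m + 1 else lam m),
            E(canon n k (s, lam s + 1) := x), [])
      else (let y0 = (LEAST y. mu s < y \<and> y \<le> lam s \<and> x < E (canon n k (s, y)))
            in (lam, E(canon n k (s, y0) := x), [(E (canon n k (s, y0)), s + 1)])))"

definition fm_step :: "int \<Rightarrow> int \<Rightarrow> ('a::linorder) fm_state \<Rightarrow> 'a fm_state" where
  "fm_step n k st = (case st of (mu, lam, E, q, q') \<Rightarrow>
     (case q of
        [] \<Rightarrow> (mu, lam, E, q', [])
      | (x, s) # rest \<Rightarrow>
          (case fm_process n k mu lam E x s of (lam2, E2, new) \<Rightarrow>
             (mu, lam2, E2, rest, q' @ new))))"

definition fm_init :: "int \<Rightarrow> int \<Rightarrow> ('a::linorder) tableau \<Rightarrow> (int \<times> int) set \<Rightarrow> int \<Rightarrow> 'a fm_state" where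
  "fm_init n k R S r0 = (case R of (mu, lam, E) \<Rightarrow>
     (let nu = (THE nu. adds_to n k mu S nu);
          q0 = concat (map (\<lambda>h. map (\<lambda>y. (E (canon n k (h, y)), h + 1))
                                     (sorted_list_of_set {y. canon n k (h, y) \<in> S \<and> y \<le> lam h}))
                           [r0..r0 + k - 1])
      in (nu, (\<lambda>m. max (lam m) (nu m)), E, q0, [])))"

definition fm_final :: "int \<Rightarrow> int \<Rightarrow> ('a::linorder) tableau \<Rightarrow> (int \<times> int) set \<Rightarrow> int \<Rightarrow> 'a fm_state \<Rightarrow> bool" where
  "fm_final n k R S r0 F \<longleftrightarrow>
     (\<exists>i. F = (fm_step n k ^^ i) (fm_init n k R S r0)
          \<and> (\<forall>j<i. case (fm_step n k ^^ j) (fm_init n k R S r0) of (_, _, _, q, q') \<Rightarrow> \<not> (q = [] \<and> q' = []))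
          \<and> (case F of (_, _, _, q, q') \<Rightarrow> q = [] \<and> q' = []))"

definition fm_new_set :: "int \<Rightarrow> ('a::linorder) tableau \<Rightarrow> 'a fm_state \<Rightarrow> (int \<times> int) set" where
  "fm_new_set k R F = skew_boxes k (fst (snd R)) (fst (snd F))"

end

theory Submission imports Defs begin

lemma shift_gen:
  fixes f :: "int \<Rightarrow> int" and k d :: int
  assumes "\<forall>m. f (m + k) = f m - d"
  shows "f (m + t*k) = f m - t*d"
proof (induction t rule: int_induct[where k=0])
  case base then show ?case by simp
next
  case (step1 i)
  have "f (m + (i+1)*k) = f ((m + i*k) + k)" by (simp add: algebra_simps)
  also have "\<dots> = f (m+i*k) - d" using assms by blast
  finally show ?case using step1 by (simp add: algebra_simps)
next
  case (step2 i)
  have "f (m + i*k) = f ((m + (i-1)*k) + k)" by (simp add: algebra_simps)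
  also have "\<dots> = f (m+(i-1)*k) - d" using assms by blast
  finally show ?case using step2 by (simp add: algebra_simps)
qed

lemma cyl_per: "cyl_partition n k f \<Longrightarrow> \<forall>m. f (m + k) = f m - (n - k)"
  unfolding cyl_partition_def by (metis add_diff_cancel_right')

lemma cyl_shift: "cyl_partition n k f \<Longrightarrow> f (m + t*k) = f m - t*(n-k)"
  by (rule shift_gen[OF cyl_per])

lemma cyl_dec: "cyl_partition n k f \<Longrightarrow> f (m + 1) \<le> f m"
  unfolding cyl_partition_def by blast

lemma anti_gen:
  fixes f :: "int \<Rightarrow> int"
  assumes "\<forall>m. f (m + 1) \<le> f m" and "a \<le> b"
  shows "f b \<le> f a"
proof -
  have "\<forall>j::nat. f (a + int j) \<le> f a"
  proof
    fix j :: nat show "f (a + int j) \<le> f a"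
    proof (induction j)
      case 0 then show ?case by simp
    next
      case (Suc j)
      have "f (a + int (Suc j)) = f ((a + int j) + 1)" by (simp add: algebra_simps)
      also have "\<dots> \<le> f (a + int j)" using assms(1) by blast
      finally show ?case using Suc by simp
    qed
  qed
  moreover have "b = a + int (nat (b - a))" using assms(2) by simp
  ultimately show ?thesis by metis
qed

lemma canon_shift: "k \<noteq> 0 \<Longrightarrow> canon n k (m + t*k, y) = canon n k (m, y + t*(n-k))"
  unfolding canon_def by (simp add: algebra_simps)

lemma canon_inj2: "n \<noteq> k \<Longrightarrow> canon n k (m, y) = canon n k (m, y') \<longleftrightarrow> y = y'"
  unfolding canon_def by simp

lemma canon_other: "m mod k \<noteq> s mod k \<Longrightarrow> canon n k (m, y) \<noteq> canon n k (s, p)"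
  unfolding canon_def by simp

lemma modeq: "(k::int) > 0 \<Longrightarrow> m mod k = s mod k \<Longrightarrow> \<exists>t. m = s + t*k"
proof -
  assume "k > 0" "m mod k = s mod k"
  then have "k dvd m - s" using mod_eq_dvd_iff by blast
  then obtain t where "m - s = k * t" by (auto simp: dvd_def)
  then show ?thesis by (intro exI[of _ t]) (simp add: algebra_simps)
qed

lemma mod_shift: "(s + t*(k::int)) mod k = s mod k" by simp

lemma div_shift: "(k::int) \<noteq> 0 \<Longrightarrow> (s + t*k - s) div k = t" by simp

definition ent :: "int \<Rightarrow> int \<Rightarrow> (int \<times> int \<Rightarrow> 'a) \<Rightarrow> int \<Rightarrow> int \<Rightarrow> 'a" where
  "ent n k E m y = E (canon n k (m, y))"

lemma ent_shift: "k \<noteq> 0 \<Longrightarrow> ent n k E (s + t*k) y = ent n k E s (y + t*(n-k))"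
  unfolding ent_def using canon_shift by metis

lemma ent_upd_same: "n \<noteq> k \<Longrightarrow> ent n k (E(canon n k (s,p) := v)) s y = (if y = p then v else ent n k E s y)"
  unfolding ent_def using canon_inj2 by auto

lemma ent_upd_other: "m mod k \<noteq> s mod k \<Longrightarrow> ent n k (E(canon n k (s,p) := v)) m y = ent n k E m y"
  unfolding ent_def using canon_other by auto


locale fmctx =
  fixes n k :: int and mu0 lam0 nu :: "int \<Rightarrow> int" and E0 :: "int \<times> int \<Rightarrow> 'a::linorder"
  assumes k1: "1 \<le> k" and kn: "k < n"
    and cmu: "cyl_partition n k mu0" and clam: "cyl_partition n k lam0" and cnu: "cyl_partition n k nu"
    and mulam: "\<forall>m. mu0 m \<le> lam0 m"
    and rowE: "\<forall>x y. in_skew mu0 lam0 (x, y) \<and> in_skew mu0 lam0 (x, y + 1) \<longrightarrow>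
            E0 (canon n k (x, y)) \<le> E0 (canon n k (x, y + 1))"
    and colE: "\<forall>x y. in_skew mu0 lam0 (x, y) \<and> in_skew mu0 lam0 (x + 1, y) \<longrightarrow>
            E0 (canon n k (x, y)) < E0 (canon n k (x + 1, y))"
    and munu: "\<forall>m. mu0 m \<le> nu m"
    and strip: "\<forall>m. nu (m + 1) \<le> mu0 m"
begin

lemma k0: "k \<noteq> 0" and kpos: "k > 0" and dpos: "n - k > 0" and nk: "n \<noteq> k"
  using k1 kn by auto

lemma row_weak0:
  assumes "mu0 m < a" "a \<le> b" "b \<le> lam0 m"
  shows "ent n k E0 m a \<le> ent n k E0 m b"
proof -
  have "\<forall>j::nat. a + int j \<le> lam0 m \<longrightarrow> ent n k E0 m a \<le> ent n k E0 m (a + int j)"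
  proof
    fix j :: nat show "a + int j \<le> lam0 m \<longrightarrow> ent n k E0 m a \<le> ent n k E0 m (a + int j)"
    proof (induction j)
      case 0 then show ?case by simp
    next
      case (Suc j)
      show ?case
      proof
        assume h: "a + int (Suc j) \<le> lam0 m"
        have "in_skew mu0 lam0 (m, a + int j)" "in_skew mu0 lam0 (m, a + int j + 1)"
          using h assms(1) unfolding in_skew_def in_shape_def by auto
        then have "ent n k E0 m (a + int j) \<le> ent n k E0 m (a + int j + 1)"
          using rowE unfolding ent_def by blast
        moreover have "ent n k E0 m a \<le> ent n k E0 m (a + int j)" using Suc h by simp
        ultimately show "ent n k E0 m a \<le> ent n k E0 m (a + int (Suc j))"
          by (metis (no_types, opaque_lifting) add.assoc of_nat_Suc add.commute order_trans)
      qed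
    qed
  qed
  moreover have "b = a + int (nat (b - a))" using assms(2) by simp
  ultimately show ?thesis using assms(3) by metis
qed

lemma col0:
  assumes "mu0 m < c" "c \<le> lam0 m" "mu0 (m+1) < c" "c \<le> lam0 (m+1)"
  shows "ent n k E0 m c < ent n k E0 (m+1) c"
  using colE assms unfolding ent_def in_skew_def in_shape_def by auto

definition Fok :: "(int \<Rightarrow> int) \<Rightarrow> (int \<Rightarrow> int) \<Rightarrow> (int \<times> int \<Rightarrow> 'a) \<Rightarrow> bool" where
  "Fok F W E \<longleftrightarrow> (\<forall>m. F (m + k) = F m - (n - k)) \<and> (\<forall>m. nu m \<le> F m) \<and> (\<forall>m. F m \<le> W m)
     \<and> (\<forall>m. W m \<le> max (lam0 m) (F m))
     \<and> (\<forall>m y. F m < y \<longrightarrow> y \<le> lam0 m \<longrightarrow> ent n k E m y = ent n k E0 m y)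
     \<and> (\<forall>m. F (m + 1) \<le> F m)
     \<and> (\<forall>m y z. nu (m + 1) < y \<longrightarrow> y \<le> F (m + 1) \<longrightarrow> y \<le> W (m + 1) \<longrightarrow> F m < z \<longrightarrow> z \<le> lam0 m
            \<longrightarrow> ent n k E (m + 1) y \<le> ent n k E0 m z)"

definition itok :: "(int \<Rightarrow> int) \<Rightarrow> (int \<Rightarrow> int) \<Rightarrow> (int \<times> int \<Rightarrow> 'a) \<Rightarrow> 'a \<times> int \<times> int \<Rightarrow> bool" where
  "itok F W E it \<longleftrightarrow> (case it of (x, s, c) \<Rightarrow>
     mu0 (s - 1) < c \<and> c \<le> lam0 (s - 1) \<and> x = ent n k E0 (s - 1) c \<and> F s < c \<and> c \<le> F (s - 1)
     \<and> (\<forall>y. nu s < y \<longrightarrow> y \<le> F s \<longrightarrow> y \<le> W s \<longrightarrow> ent n k E s y \<le> x))"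

definition ordr :: "'a \<times> int \<times> int \<Rightarrow> 'a \<times> int \<times> int \<Rightarrow> bool" where
  "ordr a b \<longleftrightarrow> (case a of (x1, s1, c1) \<Rightarrow> case b of (x2, s2, c2) \<Rightarrow>
      \<forall>t. s2 = s1 + t*k \<longrightarrow> c1 < c2 + t*(n - k))"

definition Inv :: "'a fm_state \<Rightarrow> bool" where
  "Inv st \<longleftrightarrow> (case st of (I, W, E, q, q') \<Rightarrow> I = nu \<and> cyl_partition n k W \<and> (\<forall>m. lam0 m \<le> W m)
     \<and> (\<forall>m. W (m + 1) \<le> lam0 m)
     \<and> (\<exists>F Qc. Fok F W E \<and> map (\<lambda>(x, s, c). (x, s)) Qc = q @ q' \<and> (\<forall>it\<in>set Qc. itok F W E it)
             \<and> sorted_wrt ordr Qc))"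

end

context fmctx begin

lemma rowcases:
  assumes "\<And>t. m = s + t*k \<Longrightarrow> P" and "m mod k \<noteq> s mod k \<Longrightarrow> P"
  shows P
  using assms modeq[OF kpos] by blast

definition Fupd :: "(int \<Rightarrow> int) \<Rightarrow> int \<Rightarrow> int \<Rightarrow> int \<Rightarrow> int" where
  "Fupd F s p m = (if m mod k = s mod k then p - ((m - s) div k) * (n - k) else F m)"

lemma Fupd_same: "Fupd F s p (s + t*k) = p - t*(n-k)"
  using k0 unfolding Fupd_def by simp

lemma Fupd_other: "m mod k \<noteq> s mod k \<Longrightarrow> Fupd F s p m = F m"
  unfolding Fupd_def by simp

lemma Fok_per: "Fok F W E \<Longrightarrow> F (m + t*k) = F m - t*(n-k)"
  unfolding Fok_def by (intro shift_gen) blast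

lemma Fupd_per:
  assumes "Fok F W E"
  shows "Fupd F s p (m + k) = Fupd F s p m - (n-k)"
proof (rule rowcases[of m s])
  fix t assume mt: "m = s + t*k"
  then have "m + k = s + (t+1)*k" by (simp add: algebra_simps)
  then have "Fupd F s p (m + k) = p - (t+1)*(n-k)" using Fupd_same by presburger
  moreover have "Fupd F s p m = p - t*(n-k)" using Fupd_same mt by presburger
  ultimately show ?thesis by (simp add: algebra_simps)
next
  assume "m mod k \<noteq> s mod k"
  moreover then have "(m + k) mod k \<noteq> s mod k" by simp
  ultimately show ?thesis using assms Fupd_other unfolding Fok_def by simp
qed

lemma Fupd_ge:
  assumes "Fok F W E" "F s < p"
  shows "F m \<le> Fupd F s p m"
proof (rule rowcases[of m s])
  fix t assume mt: "m = s + t*k"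
  then show ?thesis using Fupd_same Fok_per[OF assms(1), of s t] assms(2) by simp
next
  assume "m mod k \<noteq> s mod k"
  then show ?thesis using Fupd_other by simp
qed

lemma gen_K6:
  fixes E :: "int \<times> int \<Rightarrow> 'a"
  assumes p3: "p \<le> W s + 1"
    and K4: "\<forall>y. nu s < y \<longrightarrow> y < p \<longrightarrow> y \<le> W s \<longrightarrow> ent n k E s y \<le> x"
    and m: "m mod k = s mod k" and y1: "nu m < y" and y2: "y \<le> Fupd F s p m"
  shows "ent n k (E(canon n k (s,p) := x)) m y \<le> x"
proof -
  obtain t where mt: "m = s + t*k" using modeq[OF kpos m] by blast
  have nm: "nu m = nu s - t*(n-k)" using cyl_shift[OF cnu] mt by simp
  have fm: "Fupd F s p m = p - t*(n-k)" using Fupd_same mt by simp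
  have e: "ent n k (E(canon n k (s,p) := x)) m y = ent n k (E(canon n k (s,p) := x)) s (y + t*(n-k))"
    using ent_shift[OF k0] mt by simp
  show ?thesis
  proof (cases "y + t*(n-k) = p")
    case True then show ?thesis using e ent_upd_same[OF nk, of E s p x p] by simp
  next
    case False
    then have "ent n k (E(canon n k (s,p) := x)) m y = ent n k E s (y + t*(n-k))"
      using e ent_upd_same[OF nk, of E s p x "y + t*(n-k)"] by simp
    moreover have "y + t*(n-k) < p" using False y2 fm by simp
    moreover have "nu s < y + t*(n-k)" using y1 nm by simp
    ultimately show ?thesis using K4 p3 by simp
  qed
qed

lemma gen_F5:
  fixes E :: "int \<times> int \<Rightarrow> 'a"
  assumes FO: "Fok F W E" and p1: "F s < p"
    and y1: "Fupd F s p m < y" and y2: "y \<le> lam0 m"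
  shows "ent n k (E(canon n k (s,p) := x)) m y = ent n k E0 m y"
proof (rule rowcases[of m s])
  fix t assume mt: "m = s + t*k"
  have fm: "Fupd F s p m = p - t*(n-k)" using Fupd_same mt by simp
  have "ent n k (E(canon n k (s,p) := x)) m y = ent n k (E(canon n k (s,p) := x)) s (y + t*(n-k))"
    using ent_shift[OF k0] mt by simp
  also have "\<dots> = ent n k E s (y + t*(n-k))" using ent_upd_same[OF nk, of E s p x "y + t*(n-k)"] fm y1 by simp
  also have "\<dots> = ent n k E m y" using ent_shift[OF k0, of n E s t y] mt by simp
  also have "\<dots> = ent n k E0 m y"
    using FO Fupd_ge[OF FO p1, of m] y1 y2 unfolding Fok_def by auto
  finally show ?thesis .
next
  assume "m mod k \<noteq> s mod k"
  then show ?thesis using ent_upd_other[of m k s n E p x] Fupd_other FO y1 y2 unfolding Fok_def by auto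
qed

lemma gen_F6:
  assumes FO: "Fok F W E" and p1: "F s < p" and p4: "p \<le> F (s - 1)"
  shows "Fupd F s p (m + 1) \<le> Fupd F s p m"
proof (rule rowcases[of "m+1" s])
  fix t assume mt: "m + 1 = s + t*k"
  show ?thesis
  proof (rule rowcases[of m s])
    fix t' assume mt': "m = s + t'*k"
    then have "(t - t') * k = 1" using mt by (simp add: algebra_simps)
    then have "t - t' > 0" using kpos by (smt (verit) mult_nonpos_nonneg)
    then have "t'*(n-k) \<le> t*(n-k)" using dpos by simp
    then show ?thesis using Fupd_same mt mt' by (metis diff_left_mono)
  next
    assume "m mod k \<noteq> s mod k"
    then have "Fupd F s p m = F m" using Fupd_other by simp
    also have "m = (s - 1) + t*k" using mt by simp
    then have "F m = F (s - 1) - t*(n-k)" using Fok_per[OF FO] by simp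
    finally show ?thesis using Fupd_same mt p4 by simp
  qed
next
  assume "(m + 1) mod k \<noteq> s mod k"
  then have "Fupd F s p (m+1) = F (m+1)" using Fupd_other by simp
  also have "\<dots> \<le> F m" using FO unfolding Fok_def by blast
  also have "\<dots> \<le> Fupd F s p m" using Fupd_ge[OF FO p1] by simp
  finally show ?thesis .
qed


lemma gen_F7:
  fixes E :: "int \<times> int \<Rightarrow> 'a"
  assumes FO: "Fok F W E" and A: "itok F W E (x, s, c)" and p1: "F s < p" and p3: "p \<le> W s + 1"
    and K4: "\<forall>y. nu s < y \<longrightarrow> y < p \<longrightarrow> y \<le> W s \<longrightarrow> ent n k E s y \<le> x"
    and W2o: "\<forall>m. m mod k \<noteq> s mod k \<longrightarrow> W2 m = W m"
    and y1: "nu (m + 1) < y" and y2: "y \<le> Fupd F s p (m + 1)" and y3: "y \<le> W2 (m + 1)"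
    and z1: "Fupd F s p m < z" and z2: "z \<le> lam0 m"
  shows "ent n k (E(canon n k (s,p) := x)) (m + 1) y \<le> ent n k E0 m z"
proof (rule rowcases[of "m+1" s])
  fix t assume mt: "m + 1 = s + t*k"
  then have mt2: "(m + 1) mod k = s mod k" by simp
  have k6: "ent n k (E(canon n k (s,p) := x)) (m + 1) y \<le> x"
    by (rule gen_K6[where W=W and s=s and p=p and F=F and E=E and x=x, OF p3 K4 mt2 y1 y2])
  have xe: "x = ent n k E0 (s - 1) c" and c1: "mu0 (s - 1) < c" and c2: "c \<le> F (s - 1)"
    and c3: "c \<le> lam0 (s - 1)"
    using A unfolding itok_def by auto
  have m2: "m = (s - 1) + t*k" using mt by simp
  have ez: "ent n k E0 m z = ent n k E0 (s - 1) (z + t*(n-k))" using ent_shift[OF k0] m2 by simp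
  have "F m = F (s - 1) - t*(n-k)" using Fok_per[OF FO] m2 by simp
  moreover have "F m \<le> Fupd F s p m" using Fupd_ge[OF FO p1] by simp
  ultimately have cz: "c \<le> z + t*(n-k)" using z1 c2 by simp
  have "lam0 m = lam0 (s - 1) - t*(n-k)" using cyl_shift[OF clam] m2 by simp
  then have "z + t*(n-k) \<le> lam0 (s - 1)" using z2 by simp
  then have "ent n k E0 (s - 1) c \<le> ent n k E0 (s - 1) (z + t*(n-k))"
    using row_weak0[OF c1 cz] by simp
  then show ?thesis using xe ez k6 by simp
next
  assume h: "(m + 1) mod k \<noteq> s mod k"
  then have "ent n k (E(canon n k (s,p) := x)) (m + 1) y = ent n k E (m + 1) y"
    using ent_upd_other by metis
  moreover have "Fupd F s p (m+1) = F (m+1)" using Fupd_other h by simp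
  moreover have "W2 (m+1) = W (m+1)" using W2o h by simp
  moreover have "F m < z" using Fupd_ge[OF FO p1, of m] z1 by simp
  ultimately show ?thesis using FO y1 y2 y3 z2 unfolding Fok_def by simp
qed

lemma gen_item:
  fixes E :: "int \<times> int \<Rightarrow> 'a"
  assumes FO: "Fok F W E" and A: "itok F W E (x, s, c)" and p1: "F s < p" and p2: "p \<le> c"
    and p3: "p \<le> W s + 1"
    and K4: "\<forall>y. nu s < y \<longrightarrow> y < p \<longrightarrow> y \<le> W s \<longrightarrow> ent n k E s y \<le> x"
    and W2o: "\<forall>m. m mod k \<noteq> s mod k \<longrightarrow> W2 m = W m"
    and B: "itok F W E (xb, sb, cb)" and o: "ordr (x, s, c) (xb, sb, cb)"
  shows "itok (Fupd F s p) W2 (E(canon n k (s,p) := x)) (xb, sb, cb)"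
proof -
  have b1: "mu0 (sb - 1) < cb" "cb \<le> lam0 (sb - 1)" "xb = ent n k E0 (sb - 1) cb"
    and b2: "F sb < cb" and b3: "cb \<le> F (sb - 1)"
    and b4: "\<forall>y. nu sb < y \<longrightarrow> y \<le> F sb \<longrightarrow> y \<le> W sb \<longrightarrow> ent n k E sb y \<le> xb"
    using B unfolding itok_def by auto
  have a1: "mu0 (s - 1) < c" "x = ent n k E0 (s - 1) c"
    using A unfolding itok_def by auto
  have i3: "cb \<le> Fupd F s p (sb - 1)" using b3 Fupd_ge[OF FO p1, of "sb - 1"] by simp
  show ?thesis
  proof (rule rowcases[of sb s])
    fix t assume st: "sb = s + t*k"
    have oc: "c < cb + t*(n-k)" using o st unfolding ordr_def by simp
    have fs: "Fupd F s p sb = p - t*(n-k)" using Fupd_same st by simp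
    have i2: "Fupd F s p sb < cb" using fs oc p2 by simp
    have s1: "sb - 1 = (s - 1) + t*k" using st by simp
    have "xb = ent n k E0 (s - 1) (cb + t*(n-k))" using b1(3) ent_shift[OF k0] s1 by simp
    moreover have "cb + t*(n-k) \<le> lam0 (s - 1)" using b1(2) cyl_shift[OF clam] s1 by simp
    ultimately have xxb: "x \<le> xb" using row_weak0[of "s - 1" c "cb + t*(n-k)"] a1 oc by simp
    have i4: "\<forall>y. nu sb < y \<longrightarrow> y \<le> Fupd F s p sb \<longrightarrow> y \<le> W2 sb \<longrightarrow>
               ent n k (E(canon n k (s,p) := x)) sb y \<le> xb"
    proof (intro allI impI)
      fix y assume "nu sb < y" "y \<le> Fupd F s p sb" "y \<le> W2 sb"
      moreover have "sb mod k = s mod k" using st by simp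
      ultimately have "ent n k (E(canon n k (s,p) := x)) sb y \<le> x" using gen_K6[where W=W and s=s and p=p and F=F and E=E and x=x, OF p3 K4] by blast
      then show "ent n k (E(canon n k (s,p) := x)) sb y \<le> xb" using xxb by simp
    qed
    show ?thesis unfolding itok_def using b1 i2 i3 i4 by simp
  next
    assume h: "sb mod k \<noteq> s mod k"
    have i4: "\<forall>y. nu sb < y \<longrightarrow> y \<le> Fupd F s p sb \<longrightarrow> y \<le> W2 sb \<longrightarrow>
               ent n k (E(canon n k (s,p) := x)) sb y \<le> xb"
      using b4 h Fupd_other W2o ent_upd_other by metis
    show ?thesis unfolding itok_def using b1 b2 i3 i4 h Fupd_other by simp
  qed
qed


lemma landing_core:
  fixes E :: "int \<times> int \<Rightarrow> 'a"
  assumes FO: "Fok F W E" and A: "itok F W E (x, s, c)" and cW: "c \<le> W s"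
  shows "nu s < c \<and> x < ent n k E s c"
proof -
  have a: "mu0 (s - 1) < c" "c \<le> lam0 (s - 1)" "x = ent n k E0 (s - 1) c" "F s < c"
    using A unfolding itok_def by auto
  have f: "nu s \<le> F s" "W s \<le> max (lam0 s) (F s)"
    "\<forall>y. F s < y \<longrightarrow> y \<le> lam0 s \<longrightarrow> ent n k E s y = ent n k E0 s y"
    using FO unfolding Fok_def by auto
  have nc: "nu s < c" using a f by simp
  have cl: "c \<le> lam0 s" using f(2) cW a(4) by simp
  have "mu0 s < c" using nc munu by (meson le_less_trans)
  then have "ent n k E0 (s - 1) c < ent n k E0 (s - 1 + 1) c"
    using col0[of "s - 1" c] a cl by simp
  then show ?thesis using nc a(3) f(3) a(4) cl by simp
qed

lemma caseN:
  fixes E :: "int \<times> int \<Rightarrow> 'a"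
  assumes cW: "cyl_partition n k W" and lW: "\<forall>m. lam0 m \<le> W m" and Wl: "\<forall>m. W (m + 1) \<le> lam0 m"
    and FO: "Fok F W E" and A: "itok F W E (x, s, c)"
    and cond: "\<forall>y. nu s < y \<and> y \<le> W s \<longrightarrow> E (canon n k (s, y)) \<le> x"
    and Qs: "\<forall>B\<in>set Qc0. itok F W E B \<and> ordr (x, s, c) B"
    and W2def: "W2 = (\<lambda>m. if m mod k = s mod k then W m + 1 else W m)"
    and pdef: "p = W s + 1"
  shows "cyl_partition n k W2 \<and> (\<forall>m. lam0 m \<le> W2 m) \<and> (\<forall>m. W2 (m + 1) \<le> lam0 m)
     \<and> Fok (Fupd F s p) W2 (E(canon n k (s,p) := x))
     \<and> (\<forall>B\<in>set Qc0. itok (Fupd F s p) W2 (E(canon n k (s,p) := x)) B)"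
proof -
  have a: "mu0 (s - 1) < c" "c \<le> lam0 (s - 1)" "x = ent n k E0 (s - 1) c" "F s < c" "c \<le> F (s - 1)"
    using A unfolding itok_def by auto
  have f: "\<forall>m. nu m \<le> F m" "\<forall>m. F m \<le> W m" "\<forall>m. W m \<le> max (lam0 m) (F m)" "\<forall>m. F (m + 1) \<le> F m"
    using FO unfolding Fok_def by auto
  have cgt: "W s < c"
  proof (rule ccontr)
    assume "\<not> W s < c"
    then have "nu s < c \<and> x < ent n k E s c" using landing_core[OF FO A] by simp
    then have "nu s < c" "x < E (canon n k (s, c))" unfolding ent_def by auto
    moreover have "c \<le> W s" using \<open>\<not> W s < c\<close> by simp
    ultimately have "E (canon n k (s, c)) \<le> x" using cond by blast
    then show False using \<open>x < E (canon n k (s, c))\<close> by simp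
  qed
  have p1: "F s < p" using f(2) pdef by (simp add: le_imp_less_Suc)
  have p2: "p \<le> c" using cgt pdef by simp
  have p3: "p \<le> W s + 1" using pdef by simp
  have K4: "\<forall>y. nu s < y \<longrightarrow> y < p \<longrightarrow> y \<le> W s \<longrightarrow> ent n k E s y \<le> x"
    using cond unfolding ent_def by blast
  have W2o: "\<forall>m. m mod k \<noteq> s mod k \<longrightarrow> W2 m = W m" using W2def by simp
  have W2l: "W2 (m + 1) \<le> lam0 m" for m
  proof (rule rowcases[of "m+1" s])
    fix t assume mt: "m + 1 = s + t*k"
    then have "W2 (m + 1) = W (s + t*k) + 1" using W2def by simp
    also have "\<dots> = p - t*(n-k)" using cyl_shift[OF cW] pdef by simp
    also have "\<dots> \<le> lam0 (s - 1) - t*(n-k)" using p2 a(2) by simp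
    also have "\<dots> = lam0 m"
    proof -
      have "m = (s - 1) + t*k" using mt by simp
      then show ?thesis using cyl_shift[OF clam] by simp
    qed
    finally show ?thesis .
  next
    assume "(m + 1) mod k \<noteq> s mod k"
    then show ?thesis using W2o Wl by simp
  qed
  have lW2: "\<forall>m. lam0 m \<le> W2 m"
  proof
    fix m have "lam0 m \<le> W m" using lW by blast
    then show "lam0 m \<le> W2 m" using W2def by simp
  qed
  have cW2: "cyl_partition n k W2"
    unfolding cyl_partition_def
  proof (intro conjI allI)
    fix m show "W2 (m + 1) \<le> W2 m" using W2l lW2 by (meson order_trans)
  next
    fix m show "W2 m = W2 (m + k) + (n - k)"
    proof -
      have e: "W m = W (m + k) + (n - k)" using cW unfolding cyl_partition_def by blast
      have "(m + k) mod k = m mod k" by simp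
      then show ?thesis using e W2def by simp
    qed
  qed
  have FW2: "Fupd F s p m \<le> W2 m" for m
  proof (rule rowcases[of m s])
    fix t assume mt: "m = s + t*k"
    then show ?thesis using Fupd_same W2def cyl_shift[OF cW] pdef by simp
  next
    assume "m mod k \<noteq> s mod k"
    then show ?thesis using Fupd_other W2o f(2) by simp
  qed
  have W2F: "W2 m \<le> max (lam0 m) (Fupd F s p m)" for m
  proof (rule rowcases[of m s])
    fix t assume mt: "m = s + t*k"
    then show ?thesis using Fupd_same W2def cyl_shift[OF cW] pdef by simp
  next
    assume "m mod k \<noteq> s mod k"
    then show ?thesis using Fupd_other W2o f(3) by simp
  qed
  have Fok2: "Fok (Fupd F s p) W2 (E(canon n k (s,p) := x))"
    unfolding Fok_def
  proof (intro conjI allI impI)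
    fix m show "Fupd F s p (m + k) = Fupd F s p m - (n - k)" using Fupd_per[OF FO] by simp
  next
    fix m show "nu m \<le> Fupd F s p m" using f(1) Fupd_ge[OF FO p1, of m] by (meson order_trans)
  next
    fix m show "Fupd F s p m \<le> W2 m" by (rule FW2)
  next
    fix m show "W2 m \<le> max (lam0 m) (Fupd F s p m)" by (rule W2F)
  next
    fix m y assume "Fupd F s p m < y" "y \<le> lam0 m"
    then show "ent n k (E(canon n k (s, p) := x)) m y = ent n k E0 m y"
      using gen_F5[OF FO p1] by blast
  next
    fix m show "Fupd F s p (m + 1) \<le> Fupd F s p m" using gen_F6[OF FO p1] p2 a(5) by simp
  next
    fix m y z assume "nu (m + 1) < y" "y \<le> Fupd F s p (m + 1)" "y \<le> W2 (m + 1)"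
      "Fupd F s p m < z" "z \<le> lam0 m"
    then show "ent n k (E(canon n k (s, p) := x)) (m + 1) y \<le> ent n k E0 m z"
      using gen_F7[OF FO A p1 p3 K4 W2o] by blast
  qed
  have items: "\<forall>B\<in>set Qc0. itok (Fupd F s p) W2 (E(canon n k (s,p) := x)) B"
  proof
    fix B assume "B \<in> set Qc0"
    moreover obtain xb sb cb where "B = (xb, sb, cb)" by (cases B) auto
    ultimately show "itok (Fupd F s p) W2 (E(canon n k (s,p) := x)) B"
      using Qs gen_item[OF FO A p1 p2 p3 K4 W2o] by blast
  qed
  show ?thesis using cW2 lW2 W2l Fok2 items by blast
qed


lemma caseB:
  fixes E :: "int \<times> int \<Rightarrow> 'a"
  assumes cW: "cyl_partition n k W"
    and FO: "Fok F W E" and A: "itok F W E (x, s, c)"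
    and ncond: "\<not> (\<forall>y. nu s < y \<and> y \<le> W s \<longrightarrow> E (canon n k (s, y)) \<le> x)"
    and Qs: "\<forall>B\<in>set Qc0. itok F W E B \<and> ordr (x, s, c) B"
    and pdef: "p = (LEAST y. nu s < y \<and> y \<le> W s \<and> x < E (canon n k (s, y)))"
  shows "Fok (Fupd F s p) W (E(canon n k (s,p) := x))
     \<and> (\<forall>B\<in>set Qc0. itok (Fupd F s p) W (E(canon n k (s,p) := x)) B)
     \<and> itok (Fupd F s p) W (E(canon n k (s,p) := x)) (E (canon n k (s, p)), s + 1, p)
     \<and> (\<forall>B\<in>set Qc0. ordr B (E (canon n k (s, p)), s + 1, p))"
proof -
  define P where "P = (\<lambda>y. nu s < y \<and> y \<le> W s \<and> x < E (canon n k (s, y)))"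
  obtain y1 where y1: "P y1" using ncond unfolding P_def using not_le by blast
  define As where "As = {y. P y}"
  have finA: "finite As" unfolding As_def P_def
    by (rule finite_subset[of _ "{nu s<..W s}"]) auto
  have neA: "As \<noteq> {}" using y1 As_def by auto
  have Pm: "P (Min As)" using Min_in[OF finA neA] As_def by simp
  have Mmin: "\<forall>y. P y \<longrightarrow> Min As \<le> y" using Min_le[OF finA] As_def by simp
  have pM: "p = Min As" unfolding pdef
    using Least_equality[of P "Min As"] Pm Mmin P_def by blast
  have Pp: "nu s < p" "p \<le> W s" "x < ent n k E s p" using Pm pM unfolding P_def ent_def by auto
  have pmin: "\<forall>y. P y \<longrightarrow> p \<le> y" using Mmin pM by simp
  have a: "mu0 (s - 1) < c" "c \<le> lam0 (s - 1)" "x = ent n k E0 (s - 1) c" "F s < c" "c \<le> F (s - 1)"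
    and a4: "\<forall>y. nu s < y \<longrightarrow> y \<le> F s \<longrightarrow> y \<le> W s \<longrightarrow> ent n k E s y \<le> x"
    using A unfolding itok_def by auto
  have f: "\<forall>m. nu m \<le> F m" "\<forall>m. F m \<le> W m" "\<forall>m. W m \<le> max (lam0 m) (F m)" "\<forall>m. F (m + 1) \<le> F m"
    "\<forall>m y. F m < y \<longrightarrow> y \<le> lam0 m \<longrightarrow> ent n k E m y = ent n k E0 m y"
    "\<forall>m y z. nu (m + 1) < y \<longrightarrow> y \<le> F (m + 1) \<longrightarrow> y \<le> W (m + 1) \<longrightarrow> F m < z \<longrightarrow> z \<le> lam0 m
            \<longrightarrow> ent n k E (m + 1) y \<le> ent n k E0 m z"
    using FO unfolding Fok_def by auto
  have K4: "\<forall>y. nu s < y \<longrightarrow> y < p \<longrightarrow> y \<le> W s \<longrightarrow> ent n k E s y \<le> x"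
  proof (intro allI impI)
    fix y assume "nu s < y" "y < p" "y \<le> W s"
    then have "\<not> P y" using pmin by force
    then show "ent n k E s y \<le> x" using \<open>nu s < y\<close> \<open>y \<le> W s\<close> unfolding P_def ent_def by simp
  qed
  have p1: "F s < p"
  proof (rule ccontr)
    assume "\<not> F s < p"
    then have "ent n k E s p \<le> x" using a4 Pp by simp
    then show False using Pp(3) by simp
  qed
  have p2: "p \<le> c"
  proof (cases "c \<le> W s")
    case True
    then have "nu s < c \<and> x < ent n k E s c" using landing_core[OF FO A] by simp
    then have "P c" using True unfolding P_def ent_def by simp
    then show ?thesis using pmin by simp
  next
    case False then show ?thesis using Pp by simp
  qed
  have p3: "p \<le> W s + 1" using Pp by simp
  have pl: "p \<le> lam0 s" using f(3) Pp(2) p1 by (metis max.absorb_iff2 max_def not_le order_trans)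
  have ve: "E (canon n k (s, p)) = ent n k E0 s p" using f(5) p1 pl unfolding ent_def by simp
  have W2o: "\<forall>m. m mod k \<noteq> s mod k \<longrightarrow> W m = W m" by simp
  have Fok2: "Fok (Fupd F s p) W (E(canon n k (s,p) := x))"
    unfolding Fok_def
  proof (intro conjI allI impI)
    fix m show "Fupd F s p (m + k) = Fupd F s p m - (n - k)" using Fupd_per[OF FO] by simp
  next
    fix m show "nu m \<le> Fupd F s p m" using f(1) Fupd_ge[OF FO p1, of m] by (meson order_trans)
  next
    fix m show "Fupd F s p m \<le> W m"
    proof (rule rowcases[of m s])
      fix t assume "m = s + t*k"
      then show ?thesis using Fupd_same cyl_shift[OF cW] Pp(2) by simp
    next
      assume "m mod k \<noteq> s mod k"
      then show ?thesis using Fupd_other f(2) by simp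
    qed
  next
    fix m show "W m \<le> max (lam0 m) (Fupd F s p m)"
      using f(3) Fupd_ge[OF FO p1, of m] by (meson max.mono order_refl order_trans)
  next
    fix m y assume "Fupd F s p m < y" "y \<le> lam0 m"
    then show "ent n k (E(canon n k (s, p) := x)) m y = ent n k E0 m y"
      using gen_F5[OF FO p1] by blast
  next
    fix m show "Fupd F s p (m + 1) \<le> Fupd F s p m" using gen_F6[OF FO p1] p2 a(5) by simp
  next
    fix m y z assume "nu (m + 1) < y" "y \<le> Fupd F s p (m + 1)" "y \<le> W (m + 1)"
      "Fupd F s p m < z" "z \<le> lam0 m"
    then show "ent n k (E(canon n k (s, p) := x)) (m + 1) y \<le> ent n k E0 m z"
      using gen_F7[OF FO A p1 p3 K4 W2o] by blast
  qed
  have items: "\<forall>B\<in>set Qc0. itok (Fupd F s p) W (E(canon n k (s,p) := x)) B"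
  proof
    fix B assume "B \<in> set Qc0"
    moreover obtain xb sb cb where "B = (xb, sb, cb)" by (cases B) auto
    ultimately show "itok (Fupd F s p) W (E(canon n k (s,p) := x)) B"
      using Qs gen_item[OF FO A p1 p2 p3 K4 W2o] by blast
  qed
  have i2: "Fupd F s p (s + 1) < p"
  proof (rule rowcases[of "s+1" s])
    fix t assume st: "s + 1 = s + t*k"
    then have "t * k = 1" by simp
    then have "t > 0" using kpos by (smt (verit) mult_nonpos_nonneg)
    then have "t * (n - k) > 0" using dpos by simp
    moreover have "Fupd F s p (s + 1) = p - t*(n-k)" using Fupd_same[of F s p t] st by simp
    ultimately show ?thesis by simp
  next
    assume h: "(s + 1) mod k \<noteq> s mod k"
    then show ?thesis using Fupd_other f(4) p1 by (metis order_le_less_trans)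
  qed
  have i3: "p \<le> Fupd F s p s" using Fupd_same[of F s p 0] by simp
  have i4: "\<forall>y. nu (s + 1) < y \<longrightarrow> y \<le> Fupd F s p (s + 1) \<longrightarrow> y \<le> W (s + 1) \<longrightarrow>
      ent n k (E(canon n k (s,p) := x)) (s + 1) y \<le> E (canon n k (s, p))"
  proof (intro allI impI)
    fix y assume y: "nu (s + 1) < y" "y \<le> Fupd F s p (s + 1)" "y \<le> W (s + 1)"
    show "ent n k (E(canon n k (s,p) := x)) (s + 1) y \<le> E (canon n k (s, p))"
    proof (rule rowcases[of "s+1" s])
      fix t assume st1: "s + 1 = s + t*k"
      have "(s + 1) mod k = s mod k" using mod_shift[of s t k] st1 by metis
      then have "ent n k (E(canon n k (s,p) := x)) (s + 1) y \<le> x"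
        using gen_K6[where W=W and s=s and p=p and F=F and E=E and x=x, OF p3 K4] y by blast
      then show ?thesis using Pp(3) unfolding ent_def by simp
    next
      assume h: "(s + 1) mod k \<noteq> s mod k"
      then have "ent n k (E(canon n k (s,p) := x)) (s + 1) y = ent n k E (s + 1) y"
        using ent_upd_other by metis
      moreover have "Fupd F s p (s + 1) = F (s + 1)" using Fupd_other h by simp
      ultimately show ?thesis using f(6) y p1 pl ve by simp
    qed
  qed
  have newok: "itok (Fupd F s p) W (E(canon n k (s,p) := x)) (E (canon n k (s, p)), s + 1, p)"
  proof -
    have "mu0 s < p" using munu Pp(1) by (meson le_less_trans)
    then show ?thesis unfolding itok_def using pl ve i2 i3 i4 by simp
  qed
  have ords: "\<forall>B\<in>set Qc0. ordr B (E (canon n k (s, p)), s + 1, p)"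
  proof
    fix B assume "B \<in> set Qc0"
    moreover obtain xb sb cb where Bd: "B = (xb, sb, cb)" by (cases B) auto
    ultimately have "itok F W E (xb, sb, cb)" using Qs by blast
    then have cb: "cb \<le> F (sb - 1)" unfolding itok_def by simp
    show "ordr B (E (canon n k (s, p)), s + 1, p)"
      unfolding ordr_def Bd
    proof (simp, intro allI impI)
      fix t assume "s + 1 = sb + t*k"
      then have "sb - 1 = s + (-t)*k" by simp
      then have "F (sb - 1) = F s + t*(n-k)" using Fok_per[OF FO, of s "-t"] by simp
      then show "cb < p + t*(n-k)" using cb p1 by simp
    qed
  qed
  show ?thesis using Fok2 items newok ords by blast
qed


lemma step_inv:
  assumes inv: "Inv st"
  shows "Inv (fm_step n k st)"
proof -
  obtain I W E q q' where st: "st = (I, W, E, q, q')" by (cases st) auto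
  have I: "I = nu" and cW: "cyl_partition n k W" and lW: "\<forall>m. lam0 m \<le> W m"
    and Wl: "\<forall>m. W (m + 1) \<le> lam0 m"
    using inv st unfolding Inv_def by auto
  obtain F Qc where FO: "Fok F W E" and mQ: "map (\<lambda>(x, s, c). (x, s)) Qc = q @ q'"
    and its: "\<forall>it\<in>set Qc. itok F W E it" and so: "sorted_wrt ordr Qc"
    using inv st unfolding Inv_def by auto
  show ?thesis
  proof (cases q)
    case Nil
    then have "fm_step n k st = (I, W, E, q', [])" using st unfolding fm_step_def by simp
    then show ?thesis unfolding Inv_def using I cW lW Wl FO mQ its so Nil by auto
  next
    case (Cons a rest)
    obtain x s where a: "a = (x, s)" by (cases a) auto
    obtain it0 Qc0 where Qc: "Qc = it0 # Qc0" using mQ Cons by (cases Qc) auto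
    obtain c where it0: "it0 = (x, s, c)" and mQ0: "map (\<lambda>(x, s, c). (x, s)) Qc0 = rest @ q'"
      using mQ Cons a Qc by (cases it0) auto
    have A: "itok F W E (x, s, c)" using its Qc it0 by simp
    have Qs: "\<forall>B\<in>set Qc0. itok F W E B \<and> ordr (x, s, c) B" using its so Qc it0 by simp
    have so0: "sorted_wrt ordr Qc0" using so Qc by simp
    have step: "fm_step n k st = (case fm_process n k nu W E x s of (lam2, E2, new) \<Rightarrow>
                  (nu, lam2, E2, rest, q' @ new))"
      using st Cons a I unfolding fm_step_def by simp
    show ?thesis
    proof (cases "\<forall>y. nu s < y \<and> y \<le> W s \<longrightarrow> E (canon n k (s, y)) \<le> x")
      case True
      define W2 where "W2 = (\<lambda>m. if m mod k = s mod k then W m + 1 else W m)"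
      define p where "p = W s + 1"
      have fp: "fm_process n k nu W E x s = (W2, E(canon n k (s, p) := x), [])"
        unfolding fm_process_def W2_def p_def using True by simp
      have R: "cyl_partition n k W2 \<and> (\<forall>m. lam0 m \<le> W2 m) \<and> (\<forall>m. W2 (m + 1) \<le> lam0 m)
         \<and> Fok (Fupd F s p) W2 (E(canon n k (s,p) := x))
         \<and> (\<forall>B\<in>set Qc0. itok (Fupd F s p) W2 (E(canon n k (s,p) := x)) B)"
        by (rule caseN[OF cW lW Wl FO A True Qs W2_def p_def])
      have "fm_step n k st = (nu, W2, E(canon n k (s, p) := x), rest, q')" using step fp by simp
      then show ?thesis unfolding Inv_def using R mQ0 so0 by auto
    next
      case False
      define p where "p = (LEAST y. nu s < y \<and> y \<le> W s \<and> x < E (canon n k (s, y)))"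
      have fp: "fm_process n k nu W E x s = (W, E(canon n k (s, p) := x), [(E (canon n k (s, p)), s + 1)])"
        unfolding fm_process_def p_def Let_def using False by simp
      have R: "Fok (Fupd F s p) W (E(canon n k (s,p) := x))
         \<and> (\<forall>B\<in>set Qc0. itok (Fupd F s p) W (E(canon n k (s,p) := x)) B)
         \<and> itok (Fupd F s p) W (E(canon n k (s,p) := x)) (E (canon n k (s, p)), s + 1, p)
         \<and> (\<forall>B\<in>set Qc0. ordr B (E (canon n k (s, p)), s + 1, p))"
        by (rule caseB[OF cW FO A False Qs p_def])
      define nw where "nw = (E (canon n k (s, p)), s + 1, p)"
      have st2: "fm_step n k st = (nu, W, E(canon n k (s, p) := x), rest, q' @ [(E (canon n k (s, p)), s + 1)])"
        using step fp by simp
      have m2: "map (\<lambda>(x, s, c). (x, s)) (Qc0 @ [nw])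
          = (rest @ q' @ [(E (canon n k (s, p)), s + 1)])" using mQ0 nw_def by simp
      have s2: "sorted_wrt ordr (Qc0 @ [nw])"
        using so0 R nw_def by (simp add: sorted_wrt_append)
      have i2: "\<forall>it\<in>set (Qc0 @ [nw]). itok (Fupd F s p) W (E(canon n k (s,p) := x)) it"
        using R nw_def by auto
      have X: "\<exists>F Qc. Fok F W (E(canon n k (s,p) := x)) \<and>
          map (\<lambda>(x, s, c). (x, s)) Qc = rest @ q' @ [(E (canon n k (s, p)), s + 1)] \<and>
          (\<forall>it\<in>set Qc. itok F W (E(canon n k (s,p) := x)) it) \<and> sorted_wrt ordr Qc"
        using R m2 s2 i2 by blast
      show ?thesis unfolding Inv_def st2 using cW lW Wl X by simp
    qed
  qed
qed


definition Yset :: "(int \<times> int) set \<Rightarrow> int \<Rightarrow> int set" where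
  "Yset S h = {y. canon n k (h, y) \<in> S \<and> y \<le> lam0 h}"

definition gh :: "(int \<times> int) set \<Rightarrow> int \<Rightarrow> ('a \<times> int \<times> int) list" where
  "gh S h = map (\<lambda>y. (E0 (canon n k (h, y)), h + 1, y)) (sorted_list_of_set (Yset S h))"

lemma sorted_gh: "sorted_wrt ordr (gh S h)"
  unfolding gh_def sorted_wrt_map
proof (rule sorted_wrt_mono_rel[of _ "(<)"])
  fix y1 y2 :: int assume "y1 < y2"
  then show "ordr (E0 (canon n k (h, y1)), h + 1, y1) (E0 (canon n k (h, y2)), h + 1, y2)"
    unfolding ordr_def using k0 by simp
next
  show "sorted_wrt (<) (sorted_list_of_set (Yset S h))"
    using strict_sorted_list_of_set[of "Yset S h"] by simp
qed

lemma sorted_concat_gh: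
  "sorted_wrt (<) hs \<Longrightarrow> set hs \<subseteq> {r0..r0 + k - 1} \<Longrightarrow> sorted_wrt ordr (concat (map (gh S) hs))"
proof (induction hs)
  case Nil then show ?case by simp
next
  case (Cons h hs)
  have cross: "\<forall>a\<in>set (gh S h). \<forall>b\<in>set (concat (map (gh S) hs)). ordr a b"
  proof (intro ballI)
    fix a b assume a: "a \<in> set (gh S h)" and b: "b \<in> set (concat (map (gh S) hs))"
    obtain y1 where a1: "a = (E0 (canon n k (h, y1)), h + 1, y1)" using a unfolding gh_def by (auto simp del: set_sorted_list_of_set)
    obtain h' where h': "h' \<in> set hs" "b \<in> set (gh S h')" using b by (auto simp del: set_sorted_list_of_set)
    obtain y2 where b1: "b = (E0 (canon n k (h', y2)), h' + 1, y2)" using h'(2) unfolding gh_def by (auto simp del: set_sorted_list_of_set)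
    have hh: "h < h'" using Cons.prems(1) h'(1) by simp
    have hr: "r0 \<le> h" "h' \<le> r0 + k - 1" using Cons.prems(2) h'(1) by auto
    show "ordr a b" unfolding ordr_def a1 b1
    proof (simp, intro allI impI)
      fix t assume "h' = h + t*k"
      then have a1: "t * k > 0" "t * k \<le> k - 1" using hh hr by linarith+
      then have "t > 0" using kpos by (simp add: zero_less_mult_iff)
      then have "t * k \<ge> 1 * k" using kpos by (intro mult_right_mono) auto
      then have "t * k \<ge> k" by simp
      then show "y1 < y2 + t * (n - k)" using a1 by linarith
    qed
  qed
  have IH: "sorted_wrt ordr (concat (map (gh S) hs))"
    using Cons.IH Cons.prems by simp
  have e: "concat (map (gh S) (h # hs)) = gh S h @ concat (map (gh S) hs)" by simp
  show ?case unfolding e sorted_wrt_append using sorted_gh IH cross by blast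
qed

lemma init_inv:
  assumes Sd: "\<forall>h y. canon n k (h, y) \<in> S \<longleftrightarrow> mu0 h < y \<and> y \<le> nu h"
    and th: "(THE nu'. adds_to n k mu0 S nu') = nu"
  shows "Inv (fm_init n k (mu0, lam0, E0) S r0)"
proof -
  define W where "W = (\<lambda>m. max (lam0 m) (nu m))"
  define Qc where "Qc = concat (map (gh S) [r0..r0 + k - 1])"
  define q0 where "q0 = concat (map (\<lambda>h. map (\<lambda>y. (E0 (canon n k (h, y)), h + 1))
                                     (sorted_list_of_set {y. canon n k (h, y) \<in> S \<and> y \<le> lam0 h}))
                           [r0..r0 + k - 1])"
  have fi: "fm_init n k (mu0, lam0, E0) S r0 = (nu, W, E0, q0, [])"
    unfolding fm_init_def Let_def prod.case th W_def q0_def by (rule refl)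
  have mQ: "map (\<lambda>(x, s, c). (x, s)) Qc = q0 @ []"
    unfolding Qc_def q0_def gh_def Yset_def by (simp add: map_concat comp_def)
  have cl: "\<forall>m. lam0 (m + 1) \<le> lam0 m" "\<forall>m. lam0 m = lam0 (m + k) + (n - k)"
    using clam unfolding cyl_partition_def by blast+
  have cn: "\<forall>m. nu (m + 1) \<le> nu m" "\<forall>m. nu m = nu (m + k) + (n - k)"
    using cnu unfolding cyl_partition_def by blast+
  have cW: "cyl_partition n k W"
    unfolding cyl_partition_def
  proof (intro conjI allI)
    fix m
    have "lam0 (m + 1) \<le> lam0 m" "nu (m + 1) \<le> nu m" using cl cn by blast+
    then show "W (m + 1) \<le> W m" unfolding W_def by (rule max.mono)
  next
    fix m
    have "lam0 m = lam0 (m + k) + (n - k)" "nu m = nu (m + k) + (n - k)" using cl cn by blast+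
    then show "W m = W (m + k) + (n - k)" unfolding W_def by simp
  qed
  have lW: "\<forall>m. lam0 m \<le> W m" unfolding W_def by simp
  have Wl: "\<forall>m. W (m + 1) \<le> lam0 m"
  proof
    fix m
    have a: "lam0 (m + 1) \<le> lam0 m" using cl by blast
    have "nu (m + 1) \<le> mu0 m" "mu0 m \<le> lam0 m" using strip mulam by blast+
    then have b: "nu (m + 1) \<le> lam0 m" by (rule order_trans)
    show "W (m + 1) \<le> lam0 m" unfolding W_def using a b by simp
  qed
  have FO: "Fok nu W E0"
    unfolding Fok_def
  proof (intro conjI allI impI)
    fix m show "nu (m + k) = nu m - (n - k)" using cyl_per[OF cnu] by blast
  next
    fix m show "nu m \<le> nu m" by simp
  next
    fix m show "nu m \<le> W m" unfolding W_def by simp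
  next
    fix m show "W m \<le> max (lam0 m) (nu m)" unfolding W_def by simp
  next
    fix m y show "ent n k E0 m y = ent n k E0 m y" by simp
  next
    fix m show "nu (m + 1) \<le> nu m" using cn by blast
  next
    fix m y z assume "nu (m + 1) < y" "y \<le> nu (m + 1)"
    then show "ent n k E0 (m + 1) y \<le> ent n k E0 m z" by simp
  qed
  have its: "\<forall>it\<in>set Qc. itok nu W E0 it"
  proof
    fix it assume "it \<in> set Qc"
    then obtain h where "it \<in> set (gh S h)" unfolding Qc_def by auto
    then obtain y where y: "y \<in> set (sorted_list_of_set (Yset S h))"
      and itd: "it = (E0 (canon n k (h, y)), h + 1, y)"
      unfolding gh_def by auto
    have fin: "finite (Yset S h)"
      by (rule finite_subset[of _ "{mu0 h<..lam0 h}"]) (auto simp: Yset_def Sd)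
    then have "y \<in> Yset S h" using y by simp
    then have y1: "mu0 h < y" "y \<le> nu h" "y \<le> lam0 h" unfolding Yset_def using Sd by auto
    have "nu (h + 1) < y" using strip y1 by (meson le_less_trans)
    then show "itok nu W E0 it" unfolding itok_def itd ent_def using y1 by simp
  qed
  have so: "sorted_wrt ordr Qc" unfolding Qc_def by (rule sorted_concat_gh) auto
  have X: "\<exists>F Qc. Fok F W E0 \<and> map (\<lambda>(x, s, c). (x, s)) Qc = q0 @ [] \<and> (\<forall>it\<in>set Qc. itok F W E0 it)
             \<and> sorted_wrt ordr Qc" using FO mQ its so by blast
  show ?thesis unfolding Inv_def fi using cW lW Wl X by simp
qed


lemma iter_inv: "Inv st \<Longrightarrow> Inv ((fm_step n k ^^ i) st)"
  by (induction i) (auto intro: step_inv)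

end

lemma hs_final:
  fixes n k :: int and lam W :: "int \<Rightarrow> int"
  assumes k1: "1 \<le> k" and kn: "k < n" and cl: "cyl_partition n k lam" and cW: "cyl_partition n k W"
    and lW: "\<forall>m. lam m \<le> W m" and Wl: "\<forall>m. W (m + 1) \<le> lam m"
  shows "horizontal_strip n k (skew_boxes k lam W)"
  unfolding horizontal_strip_def
proof (intro conjI)
  show "\<exists>mu' lam'. cyl_partition n k mu' \<and> cyl_partition n k lam' \<and> (\<forall>m. mu' m \<le> lam' m)
         \<and> skew_boxes k lam W = skew_boxes k mu' lam'"
    using cl cW lW by blast
next
  have Wdec: "\<forall>m. W (m + 1) \<le> W m" using cW unfolding cyl_partition_def by blast
  show "\<forall>b1\<in>skew_boxes k lam W. \<forall>b2\<in>skew_boxes k lam W. b1 \<noteq> b2 \<longrightarrow> box_column n k b1 \<noteq> box_column n k b2"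
  proof (intro ballI impI)
    fix b1 b2 assume b1: "b1 \<in> skew_boxes k lam W" and b2: "b2 \<in> skew_boxes k lam W" and ne: "b1 \<noteq> b2"
    obtain x1 y1 where e1: "b1 = (x1, y1)" by (cases b1)
    obtain x2 y2 where e2: "b2 = (x2, y2)" by (cases b2)
    have h1: "0 \<le> x1" "x1 < k" "lam x1 < y1" "y1 \<le> W x1" using b1 e1 unfolding skew_boxes_def by auto
    have h2: "0 \<le> x2" "x2 < k" "lam x2 < y2" "y2 \<le> W x2" using b2 e2 unfolding skew_boxes_def by auto
    show "box_column n k b1 \<noteq> box_column n k b2"
    proof
      assume "box_column n k b1 = box_column n k b2"
      then have "y2 mod (n - k) = y1 mod (n - k)" using e1 e2 unfolding box_column_def by simp
      then have "(n - k) dvd (y2 - y1)" using mod_eq_dvd_iff by blast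
      then obtain t where ty: "y2 - y1 = (n - k) * t" by (auto simp: dvd_def)
      define r where "r = x2 + t * k"
      have Wr: "W r = W x2 - t * (n - k)" using cyl_shift[OF cW] r_def by simp
      have lr: "lam r = lam x2 - t * (n - k)" using cyl_shift[OF cl] r_def by simp
      have a: "y1 \<le> W r" using Wr h2 ty by (simp add: algebra_simps)
      have b: "lam r < y1" using lr h2 ty by (simp add: algebra_simps)
      consider "x1 < r" | "r < x1" | "r = x1" by linarith
      then show False
      proof cases
        case 1
        then have "W r \<le> W (x1 + 1)" using anti_gen[OF Wdec] by simp
        then show False using Wl h1 a by (meson le_less_trans not_le order_trans)
      next
        case 2
        then have "W x1 \<le> W (r + 1)" using anti_gen[OF Wdec] by simp
        then show False using Wl h1 b by (meson le_less_trans not_le order_trans)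
      next
        case 3
        then have tk: "t * k = x1 - x2" using r_def by simp
        have "t = 0"
        proof (rule ccontr)
          assume "t \<noteq> 0"
          then have "\<bar>t\<bar> \<ge> 1" by simp
          then have "\<bar>t\<bar> * k \<ge> 1 * k" using k1 by (intro mult_right_mono) auto
          then have "\<bar>t * k\<bar> \<ge> k" using k1 by (simp add: abs_mult)
          then show False using tk h1 h2 by linarith
        qed
        then have "x1 = x2" "y1 = y2" using tk ty by simp_all
        then show False using ne e1 e2 by simp
      qed
    qed
  qed
qed


theorem mainTheorem15:
  fixes n k r0 :: int and R :: "('a::linorder) tableau" and S :: "(int \<times> int) set"
    and F :: "'a fm_state"
  assumes "1 \<le> k" and "k < n"
    and "is_tableau n k R"
    and "fm_input n k R S"
    and "fm_final n k R S r0 F"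
  shows "horizontal_strip n k (fm_new_set k R F)"
proof -
  obtain mu0 lam0 E0 where R: "R = (mu0, lam0, E0)" by (cases R) auto
  have tab: "cyl_partition n k mu0" "cyl_partition n k lam0" "\<forall>m. mu0 m \<le> lam0 m"
    "\<forall>x y. in_skew mu0 lam0 (x, y) \<and> in_skew mu0 lam0 (x, y + 1) \<longrightarrow>
            E0 (canon n k (x, y)) \<le> E0 (canon n k (x, y + 1))"
    "\<forall>x y. in_skew mu0 lam0 (x, y) \<and> in_skew mu0 lam0 (x + 1, y) \<longrightarrow>
            E0 (canon n k (x, y)) < E0 (canon n k (x + 1, y))"
    using assms(3) R unfolding is_tableau_def by auto
  have inp: "\<forall>p. canon n k p \<in> S \<longrightarrow> \<not> in_shape mu0 p" "horizontal_strip n k S"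
    "\<exists>nu. adds_to n k mu0 S nu"
    using assms(4) R unfolding fm_input_def by auto
  obtain nu where ad: "adds_to n k mu0 S nu" using inp(3) by blast
  have cnu: "cyl_partition n k nu" and shp: "\<forall>p. in_shape nu p \<longleftrightarrow> in_shape mu0 p \<or> canon n k p \<in> S"
    using ad unfolding adds_to_def by auto
  have Sd: "\<forall>h y. canon n k (h, y) \<in> S \<longleftrightarrow> mu0 h < y \<and> y \<le> nu h"
  proof (intro allI iffI)
    fix h y assume "canon n k (h, y) \<in> S"
    then show "mu0 h < y \<and> y \<le> nu h" using inp(1) shp unfolding in_shape_def by force
  next
    fix h y assume "mu0 h < y \<and> y \<le> nu h"
    then show "canon n k (h, y) \<in> S" using shp unfolding in_shape_def by force
  qed
  have munu: "\<forall>m. mu0 m \<le> nu m"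
  proof
    fix m have "in_shape mu0 (m, mu0 m)" unfolding in_shape_def by simp
    then show "mu0 m \<le> nu m" using shp unfolding in_shape_def by force
  qed
  have dne: "n - k \<noteq> 0" using assms(2) by simp
  have strip: "\<forall>m. nu (m + 1) \<le> mu0 m"
  proof (rule allI, rule ccontr)
    fix m assume "\<not> nu (m + 1) \<le> mu0 m"
    define Y where "Y = nu (m + 1)"
    have mY: "mu0 m < Y" using \<open>\<not> nu (m + 1) \<le> mu0 m\<close> Y_def by simp
    have "mu0 (m + 1) \<le> mu0 m" using tab(1) unfolding cyl_partition_def by blast
    then have s1: "canon n k (m + 1, Y) \<in> S" using Sd mY Y_def by simp
    have "nu (m + 1) \<le> nu m" using cnu unfolding cyl_partition_def by blast
    then have s2: "canon n k (m, Y) \<in> S" using Sd mY Y_def by simp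
    have ne: "canon n k (m, Y) \<noteq> canon n k (m + 1, Y)"
    proof
      assume "canon n k (m, Y) = canon n k (m + 1, Y)"
      then have e1: "m mod k = (m + 1) mod k" and "(m div k) * (n - k) = ((m + 1) div k) * (n - k)"
        unfolding canon_def by simp_all
      then have e2: "m div k = (m + 1) div k" using dne by simp
      have "m = k * (m div k) + m mod k" by simp
      also have "\<dots> = k * ((m + 1) div k) + (m + 1) mod k" using e1 e2 by simp
      also have "\<dots> = m + 1" by simp
      finally show False by simp
    qed
    have "box_column n k (canon n k (m, Y)) = Y mod (n - k)"
      unfolding box_column_def canon_def by simp
    moreover have "box_column n k (canon n k (m + 1, Y)) = Y mod (n - k)"
      unfolding box_column_def canon_def by simp
    ultimately show False using inp(2) s1 s2 ne unfolding horizontal_strip_def by metis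
  qed
  have th: "(THE nu'. adds_to n k mu0 S nu') = nu"
  proof (rule the_equality)
    show "adds_to n k mu0 S nu" by (rule ad)
  next
    fix nu2 assume "adds_to n k mu0 S nu2"
    then have sh2: "\<forall>p. in_shape nu2 p \<longleftrightarrow> in_shape mu0 p \<or> canon n k p \<in> S"
      unfolding adds_to_def by auto
    show "nu2 = nu"
    proof
      fix m
      have "nu m \<le> nu2 m" using sh2 shp unfolding in_shape_def by (metis fst_conv snd_conv order_refl)
      moreover have "nu2 m \<le> nu m" using sh2 shp unfolding in_shape_def by (metis fst_conv snd_conv order_refl)
      ultimately show "nu2 m = nu m" by simp
    qed
  qed
  interpret fmctx n k mu0 lam0 nu E0
    using assms(1,2) tab cnu munu strip by unfold_locales auto
  obtain i where Fi: "F = (fm_step n k ^^ i) (fm_init n k R S r0)"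
    using assms(5) unfolding fm_final_def by blast
  have "Inv F" using Fi iter_inv init_inv[OF Sd th] R by simp
  then obtain I W E q q' where Fd: "F = (I, W, E, q, q')" and cW: "cyl_partition n k W"
    and lW: "\<forall>m. lam0 m \<le> W m" and Wl: "\<forall>m. W (m + 1) \<le> lam0 m"
    unfolding Inv_def by (cases F) auto
  have "fm_new_set k R F = skew_boxes k lam0 W" unfolding fm_new_set_def R Fd by simp
  then show ?thesis using hs_final[OF assms(1,2) tab(2) cW lW Wl] by simp
qed

end
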